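(* For every cubic graph $G$, $\nu_2(G) \geq \frac{4}{5}\cdot |V(G)|$.
   Context: Graphs are finite, without loops, possibly with multiple edges; a graph is cubic if every vertex has degree $3$. For $k\geq 1$, $\nu_k(G)$ is the maximum number of edges of a $k$-edge-colorable subgraph of $G$. *)

theory Defs
  imports Complex_Main
begin

text \<open>A finite loopless multigraph: vertex set V, edge set E (edges are abstract
objects, so parallel edges are allowed), and an endpoint map assigning to every
edge a set of exactly two distinct vertices of V.\<close>

definition multigraph :: "'v set \<Rightarrow> 'e set \<Rightarrow> ('e \<Rightarrow> 'v set) \<Rightarrow> bool" where
  "multigraph V E ends \<longleftrightarrow> finite V \<and> finite E \<and>
     (\<forall>e\<in>E. ends e \<subseteq> V \<and> card (ends e) = 2)"

definition degree :: "'e set \<Rightarrow> ('e \<Rightarrow> 'v set) \<Rightarrow> 'v \<Rightarrow> nat" where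
  "degree E ends v = card {e\<in>E. v \<in> ends e}"

definition cubic :: "'v set \<Rightarrow> 'e set \<Rightarrow> ('e \<Rightarrow> 'v set) \<Rightarrow> bool" where
  "cubic V E ends \<longleftrightarrow> multigraph V E ends \<and> (\<forall>v\<in>V. degree E ends v = 3)"

definition k_edge_colorable :: "nat \<Rightarrow> 'e set \<Rightarrow> ('e \<Rightarrow> 'v set) \<Rightarrow> bool" where
  "k_edge_colorable k F ends \<longleftrightarrow>
     (\<exists>c :: 'e \<Rightarrow> nat. (\<forall>e\<in>F. c e < k) \<and>
        (\<forall>e\<in>F. \<forall>f\<in>F. e \<noteq> f \<and> ends e \<inter> ends f \<noteq> {} \<longrightarrow> c e \<noteq> c f))"

definition nu :: "nat \<Rightarrow> 'e set \<Rightarrow> ('e \<Rightarrow> 'v set) \<Rightarrow> nat" where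
  "nu k E ends = Max {card F | F. F \<subseteq> E \<and> k_edge_colorable k F ends}"

end

theory Submission
  imports Defs
begin

lemma bip_color:
  assumes "finite F"
    and "\<forall>e\<in>F. \<exists>x y. ends e = {x,y} \<and> x \<in> X \<and> y \<notin> X"
    and "\<forall>v. degree F ends v \<le> 2"
  shows "k_edge_colorable 2 F ends"
  using assms
proof (induction "card F" arbitrary: F ends rule: less_induct)
  case less
  note fin = less.prems(1) and bip = less.prems(2) and deg = less.prems(3)
  show ?case
  proof (cases "F = {}")
    case True
    then show ?thesis unfolding k_edge_colorable_def by auto
  next
    case Fne: False
    show ?thesis
    proof (cases "\<exists>x. degree F ends x = 1")
      case True
      then obtain x where "degree F ends x = 1" by blast
      then obtain e where Ex: "{f\<in>F. x \<in> ends f} = {e}"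
        unfolding degree_def by (meson card_1_singletonE)
      hence eF: "e \<in> F" and xe: "x \<in> ends e" by auto
      obtain p q where pq: "ends e = {p,q}" "p \<in> X" "q \<notin> X" using bip eF by blast
      obtain y where ey: "ends e = {x,y}" using pq xe by (metis empty_iff insert_commute insert_iff)
      define F' where "F' = F - {e}"
      have lt: "card F' < card F" unfolding F'_def using fin eF by (rule card_Diff1_less)
      have "k_edge_colorable 2 F' ends"
      proof (rule less.hyps[OF lt])
        show "finite F'" using fin F'_def by auto
        show "\<forall>e\<in>F'. \<exists>x y. ends e = {x, y} \<and> x \<in> X \<and> y \<notin> X" using bip F'_def by auto
        show "\<forall>v. degree F' ends v \<le> 2"
        proof
          fix v
          have "degree F' ends v \<le> degree F ends v" unfolding degree_def F'_def
            by (rule card_mono) (use fin in auto)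
          thus "degree F' ends v \<le> 2" using deg by (meson order_trans)
        qed
      qed
      then obtain c :: "_ \<Rightarrow> nat" where c: "\<forall>e\<in>F'. c e < 2"
        "\<forall>e\<in>F'. \<forall>f\<in>F'. e \<noteq> f \<and> ends e \<inter> ends f \<noteq> {} \<longrightarrow> c e \<noteq> c f"
        unfolding k_edge_colorable_def by blast
      have "\<exists>k<(2::nat). \<forall>g\<in>F'. y \<in> ends g \<longrightarrow> c g \<noteq> k"
      proof (cases "\<exists>g\<in>F'. y \<in> ends g")
        case False thus ?thesis by (intro exI[of _ 0]) auto
      next
        case True
        then obtain g where g: "g \<in> F'" "y \<in> ends g" by blast
        have sub: "{e, g} \<subseteq> {f\<in>F. y \<in> ends f}" using g ey eF F'_def by auto
        have "\<forall>h\<in>F'. y \<in> ends h \<longrightarrow> h = g"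
        proof (intro ballI impI, rule ccontr)
          fix h assume h: "h \<in> F'" "y \<in> ends h" "h \<noteq> g"
          have "{e,g,h} \<subseteq> {f\<in>F. y \<in> ends f}" using sub h F'_def by auto
          hence "card {e,g,h} \<le> degree F ends y" unfolding degree_def
            by (rule card_mono[rotated]) (use fin in auto)
          moreover have "card {e,g,h} = 3" using h g F'_def by (auto simp: card_insert_if)
          moreover have "degree F ends y \<le> 2" using deg by blast
          ultimately show False by linarith
        qed
        moreover have cg: "c g < 2" using c(1) g by blast
        moreover have "c g \<noteq> 1 - c g" using cg by arith
        ultimately have "\<forall>h\<in>F'. y \<in> ends h \<longrightarrow> c h \<noteq> 1 - c g" by metis
        moreover have "1 - c g < 2" by arith
        ultimately show ?thesis by blast
      qed
      then obtain k :: nat where k: "k < 2" "\<forall>g\<in>F'. y \<in> ends g \<longrightarrow> c g \<noteq> k" by blast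
      show ?thesis unfolding k_edge_colorable_def
      proof (intro exI[of _ "c(e := k)"] conjI ballI impI)
        fix f assume "f \<in> F" thus "(c(e := k)) f < 2" using c(1) k F'_def by auto
      next
        fix f g assume fg: "f \<in> F" "g \<in> F" "f \<noteq> g \<and> ends f \<inter> ends g \<noteq> {}"
        have xonly: "\<And>h. h \<in> F \<Longrightarrow> x \<in> ends h \<Longrightarrow> h = e" using Ex by auto
        have yg: "y \<in> ends h" if hh: "h \<in> F" "h \<noteq> e" "ends e \<inter> ends h \<noteq> {}" for h
        proof -
          obtain p where p: "p \<in> ends e" "p \<in> ends h" using hh(3) by blast
          have "p \<noteq> x" using xonly hh(1,2) p(2) by blast
          hence "p = y" using p(1) ey by blast
          thus ?thesis using p(2) by simp
        qed
        show "(c(e := k)) f \<noteq> (c(e := k)) g"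
        proof (cases "f = e")
          case True
          hence "g \<in> F'" "y \<in> ends g" "g \<noteq> e" using fg yg F'_def by auto
          thus ?thesis using True k(2) by (simp; metis)
        next
          case f: False
          show ?thesis
          proof (cases "g = e")
            case True
            hence "f \<in> F'" "y \<in> ends f" using fg yg[of f] f F'_def by auto
            thus ?thesis using True k(2) f by (simp; metis)
          next
            case False
            hence "f \<in> F'" "g \<in> F'" using f fg F'_def by auto
            thus ?thesis using f False fg c(2) by simp
          qed
        qed
      qed
    next
      case nodeg1: False
      have degle: "degree F ends z \<le> 2" for z using deg by blast
      have two: "\<exists>f. f \<in> F \<and> f \<noteq> g \<and> {h\<in>F. z \<in> ends h} = {g, f}"
        if zg: "z \<in> ends g" "g \<in> F" for z g
      proof -
        have "g \<in> {h\<in>F. z \<in> ends h}" using zg by blast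
        hence "degree F ends z \<noteq> 0" unfolding degree_def using fin by auto
        hence "degree F ends z = 2" using nodeg1 degle[of z] by (metis One_nat_def le_Suc_eq le_0_eq numeral_2_eq_2)
        then obtain a b where ab: "{h\<in>F. z \<in> ends h} = {a,b}" "a \<noteq> b"
          unfolding degree_def by (meson card_2_iff)
        have "g = a \<or> g = b" using ab zg by blast
        thus ?thesis
        proof
          assume "g = a" thus ?thesis using ab by (intro exI[of _ b]) blast
        next
          assume "g = b" thus ?thesis using ab by (intro exI[of _ a]) blast
        qed
      qed
      obtain e2 where e2F: "e2 \<in> F" using Fne by blast
      obtain v w where vw: "ends e2 = {v,w}" "v \<in> X" "w \<notin> X" using bip e2F by blast
      obtain e1 where e1: "e1 \<in> F" "e1 \<noteq> e2" "{h\<in>F. v \<in> ends h} = {e2, e1}"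
        using two[of v e2] vw e2F by auto
      obtain e3 where e3: "e3 \<in> F" "e3 \<noteq> e2" "{h\<in>F. w \<in> ends h} = {e2, e3}"
        using two[of w e2] vw e2F by auto
      have onlyv: "h = e1 \<or> h = e2" if "h \<in> F" "v \<in> ends h" for h
        using e1(3) that by blast
      have onlyw: "h = e3 \<or> h = e2" if "h \<in> F" "w \<in> ends h" for h
        using e3(3) that by blast
      have ve1: "v \<in> ends e1" using e1(3) by blast
      have we3: "w \<in> ends e3" using e3(3) by blast
      obtain u where u: "ends e1 = {v,u}" "u \<notin> X"
      proof -
        obtain a b where ab: "ends e1 = {a,b}" "a \<in> X" "b \<notin> X" using bip e1(1) by blast
        hence "a = v" using ve1 vw(2) by auto
        thus ?thesis using that ab by blast
      qed
      obtain z where z: "ends e3 = {z,w}" "z \<in> X"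
      proof -
        obtain a b where ab: "ends e3 = {a,b}" "a \<in> X" "b \<notin> X" using bip e3(1) by blast
        hence "b = w" using we3 vw(3) by auto
        thus ?thesis using that ab by blast
      qed
      show ?thesis
      proof (cases "e1 = e3")
        case True
        have e1vw: "ends e1 = {v,w}" using u True we3 vw by auto
        have only: "h = e1 \<or> h = e2" if "h \<in> F" "ends h \<inter> {v,w} \<noteq> {}" for h
          using that onlyv onlyw True by blast
        define F' where "F' = F - {e1, e2}"
        have lt: "card F' < card F" unfolding F'_def using fin e1 e2F
          by (intro psubset_card_mono) auto
        have "k_edge_colorable 2 F' ends"
        proof (rule less.hyps[OF lt])
          show "finite F'" using fin F'_def by auto
          show "\<forall>e\<in>F'. \<exists>x y. ends e = {x, y} \<and> x \<in> X \<and> y \<notin> X" using bip F'_def by auto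
          show "\<forall>v. degree F' ends v \<le> 2"
          proof
            fix v
            have "degree F' ends v \<le> degree F ends v" unfolding degree_def F'_def
              by (rule card_mono) (use fin in auto)
            thus "degree F' ends v \<le> 2" using deg by (meson order_trans)
          qed
        qed
        then obtain c :: "_ \<Rightarrow> nat" where c: "\<forall>e\<in>F'. c e < 2"
          "\<forall>e\<in>F'. \<forall>f\<in>F'. e \<noteq> f \<and> ends e \<inter> ends f \<noteq> {} \<longrightarrow> c e \<noteq> c f"
          unfolding k_edge_colorable_def by blast
        show ?thesis unfolding k_edge_colorable_def
        proof (intro exI[of _ "c(e1 := 0, e2 := 1)"] conjI ballI impI)
          fix f assume "f \<in> F" thus "(c(e1 := 0, e2 := 1)) f < 2" using c(1) F'_def by auto
        next
          fix f g assume fg: "f \<in> F" "g \<in> F" "f \<noteq> g \<and> ends f \<inter> ends g \<noteq> {}"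
          show "(c(e1 := 0, e2 := 1)) f \<noteq> (c(e1 := 0, e2 := 1)) g"
          proof (cases "f \<in> {e1,e2}")
            case True
            hence "ends g \<inter> {v,w} \<noteq> {}" using fg e1vw vw(1) by auto
            hence "g \<in> {e1,e2}" using only fg(2) by blast
            thus ?thesis using True fg e1(2) by auto
          next
            case fn: False
            show ?thesis
            proof (cases "g \<in> {e1,e2}")
              case True
              hence "ends f \<inter> {v,w} \<noteq> {}" using fg e1vw vw(1) by auto
              hence "f \<in> {e1,e2}" using only fg(1) by blast
              thus ?thesis using fn by blast
            next
              case False
              hence "f \<in> F'" "g \<in> F'" using fn fg F'_def by auto
              thus ?thesis using fn False fg c(2) by simp
            qed
          qed
        qed
      next
        case ne13: False
        have uw: "u \<noteq> w"
        proof
          assume "u = w"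
          hence "w \<in> ends e1" using u by auto
          thus False using onlyw e1 ne13 by blast
        qed
        have zv: "z \<noteq> v"
        proof
          assume "z = v"
          hence "v \<in> ends e3" using z by auto
          thus False using onlyv e3 ne13 by blast
        qed
        have uz: "u \<noteq> z" using u z by blast
        have vwne: "v \<noteq> w" using vw by blast
        have disj13: "ends e1 \<inter> ends e3 = {}" using u z uw zv uz vwne by auto
        have adj2: "h = e1 \<or> h = e3" if hh: "h \<in> F" "h \<noteq> e2" "ends h \<inter> ends e2 \<noteq> {}" for h
        proof -
          obtain p where p: "p \<in> ends h" "p \<in> ends e2" using hh(3) by blast
          hence "p = v \<or> p = w" using vw(1) by auto
          thus ?thesis using p(1) hh(1,2) onlyv onlyw by metis
        qed
        have adj1: "u \<in> ends h" if hh: "h \<in> F" "h \<noteq> e1" "h \<noteq> e2" "ends h \<inter> ends e1 \<noteq> {}" for h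
        proof -
          obtain p where p: "p \<in> ends h" "p \<in> ends e1" using hh(4) by blast
          hence "p = v \<or> p = u" using u(1) by auto
          thus ?thesis using p(1) hh(1,2,3) onlyv by metis
        qed
        have adj3: "z \<in> ends h" if hh: "h \<in> F" "h \<noteq> e3" "h \<noteq> e2" "ends h \<inter> ends e3 \<noteq> {}" for h
        proof -
          obtain p where p: "p \<in> ends h" "p \<in> ends e3" using hh(4) by blast
          hence "p = z \<or> p = w" using z(1) by auto
          thus ?thesis using p(1) hh(1,2,3) onlyw by metis
        qed
        define ends' where "ends' = ends(e1 := {z,u})"
        define F' where "F' = F - {e2, e3}"
        have lt: "card F' < card F" unfolding F'_def using fin e3 e2F
          by (intro psubset_card_mono) auto
        have e1F': "e1 \<in> F'" using e1 ne13 F'_def by auto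
        have "k_edge_colorable 2 F' ends'"
        proof (rule less.hyps[OF lt])
          show "finite F'" using fin F'_def by auto
          show "\<forall>e\<in>F'. \<exists>x y. ends' e = {x, y} \<and> x \<in> X \<and> y \<notin> X"
          proof
            fix e assume "e \<in> F'"
            show "\<exists>x y. ends' e = {x, y} \<and> x \<in> X \<and> y \<notin> X"
            proof (cases "e = e1")
              case True thus ?thesis using z u ends'_def by auto
            next
              case False thus ?thesis using bip \<open>e \<in> F'\<close> F'_def ends'_def by auto
            qed
          qed
          show "\<forall>y. degree F' ends' y \<le> 2"
          proof
            fix y
            show "degree F' ends' y \<le> 2"
            proof (cases "y = z")
              case True
              have sub: "{e\<in>F'. y \<in> ends' e} \<subseteq> insert e1 ({h\<in>F. z \<in> ends h} - {e3})"
                using True F'_def ends'_def by auto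
              have e3in: "e3 \<in> {h\<in>F. z \<in> ends h}" using z e3 by auto
              have fz: "finite {h\<in>F. z \<in> ends h}" using fin by auto
              have "card ({h\<in>F. z \<in> ends h} - {e3}) = degree F ends z - 1"
                unfolding degree_def using e3in fz by simp
              moreover have "card (insert e1 ({h\<in>F. z \<in> ends h} - {e3})) \<le> Suc (card ({h\<in>F. z \<in> ends h} - {e3}))"
                using fz by (simp add: card_insert_if)
              moreover have "degree F ends z \<le> 2" by (rule degle)
              ultimately have "card (insert e1 ({h\<in>F. z \<in> ends h} - {e3})) \<le> 2" by linarith
              moreover have "card {e\<in>F'. y \<in> ends' e} \<le> card (insert e1 ({h\<in>F. z \<in> ends h} - {e3}))"
                by (rule card_mono[OF _ sub]) (use fz in auto)
              ultimately show ?thesis unfolding degree_def by linarith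
            next
              case False
              have sub: "{e\<in>F'. y \<in> ends' e} \<subseteq> {h\<in>F. y \<in> ends h}"
                using False F'_def ends'_def u by auto
              have "card {e\<in>F'. y \<in> ends' e} \<le> card {h\<in>F. y \<in> ends h}"
                by (rule card_mono[OF _ sub]) (use fin in auto)
              thus ?thesis using degle[of y] unfolding degree_def by linarith
            qed
          qed
        qed
        then obtain c :: "_ \<Rightarrow> nat" where c: "\<forall>e\<in>F'. c e < 2"
          "\<forall>e\<in>F'. \<forall>f\<in>F'. e \<noteq> f \<and> ends' e \<inter> ends' f \<noteq> {} \<longrightarrow> c e \<noteq> c f"
          unfolding k_edge_colorable_def by blast
        define c2 where "c2 = c(e2 := 1 - c e1, e3 := c e1)"
        have ce1: "c e1 < 2" using c(1) e1F' by blast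
        have c2e1: "c2 e1 = c e1" using c2_def e1(2) ne13 by simp
        have c2e2: "c2 e2 = 1 - c e1" using c2_def e3(2) by simp
        have c2e3: "c2 e3 = c e1" using c2_def by simp
        have neq1: "1 - c e1 \<noteq> c e1" using ce1 by arith
        have c2o: "c2 h = c h" if "h \<noteq> e2" "h \<noteq> e3" for h using c2_def that by simp
        have ends'o: "ends' h = ends h" if "h \<noteq> e1" for h using ends'_def that by simp
        define rk where "rk h = (if h = e2 then 3 else if h = e3 then 2 else if h = e1 then 1 else (0::nat))" for h
        have one: "c2 f \<noteq> c2 g" if fg: "f \<in> F" "g \<in> F" "f \<noteq> g" "ends f \<inter> ends g \<noteq> {}" "rk g \<le> rk f" for f g
        proof (cases "f = e2")
          case True
          hence "g = e1 \<or> g = e3" using adj2[of g] fg by blast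
          thus ?thesis using True c2e1 c2e2 c2e3 neq1 by auto
        next
          case n2: False
          show ?thesis
          proof (cases "f = e3")
            case True
            hence g2: "g \<noteq> e2" using fg rk_def n2 by auto
            have g1: "g \<noteq> e1" using True fg disj13 by auto
            have "z \<in> ends g" using adj3[of g] fg True g2 by blast
            hence "z \<in> ends' g \<inter> ends' e1" using ends'o[OF g1] ends'_def by simp
            moreover have "g \<in> F'" using g2 fg True F'_def by auto
            ultimately have "c g \<noteq> c e1" using c(2) e1F' g1 by blast
            thus ?thesis using True c2e3 c2o[of g] g2 fg by auto
          next
            case n3: False
            show ?thesis
            proof (cases "f = e1")
              case True
              hence g23: "g \<noteq> e2" "g \<noteq> e3" "g \<noteq> e1" using fg rk_def ne13 e3(2) e1(2) by auto
              have "u \<in> ends g" using adj1[of g] fg True g23 by blast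
              hence "u \<in> ends' g \<inter> ends' e1" using ends'o[OF g23(3)] ends'_def by simp
              moreover have "g \<in> F'" using g23 fg F'_def by auto
              ultimately have "c g \<noteq> c e1" using c(2) e1F' g23 by blast
              thus ?thesis using True c2e1 c2o[of g] g23 by auto
            next
              case n1: False
              hence g: "g \<noteq> e2" "g \<noteq> e3" "g \<noteq> e1" using fg rk_def n2 n3 ne13 e3(2) e1(2) by auto
              have "f \<in> F'" "g \<in> F'" using g n2 n3 fg F'_def by auto
              moreover have "ends' f \<inter> ends' g \<noteq> {}" using ends'o[OF n1] ends'o[OF g(3)] fg by simp
              ultimately have "c f \<noteq> c g" using c(2) fg(3) by blast
              thus ?thesis using c2o g n2 n3 by simp
            qed
          qed
        qed
        show ?thesis unfolding k_edge_colorable_def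
        proof (intro exI[of _ c2] conjI ballI impI)
          fix f assume fF: "f \<in> F"
          show "c2 f < 2"
          proof (cases "f = e2 \<or> f = e3")
            case True thus ?thesis using c2e2 c2e3 ce1 by auto
          next
            case False
            hence "f \<in> F'" using fF F'_def by auto
            thus ?thesis using c(1) c2o False by auto
          qed
        next
          fix f g assume fg: "f \<in> F" "g \<in> F" "f \<noteq> g \<and> ends f \<inter> ends g \<noteq> {}"
          show "c2 f \<noteq> c2 g"
          proof (cases "rk g \<le> rk f")
            case True thus ?thesis using one fg by blast
          next
            case False
            hence "c2 g \<noteq> c2 f" using one[of g f] fg by (auto simp: Int_commute)
            thus ?thesis by simp
          qed
        qed
      qed
    qed
  qed
qed


lemma flip_cut:
  assumes "card (ends e) = 2"
  shows "(card (ends e \<inter> (if v \<in> X then X - {v} else insert v X)) = 1) \<longleftrightarrow>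
         (if v \<in> ends e then card (ends e \<inter> X) \<noteq> 1 else card (ends e \<inter> X) = 1)"
proof -
  obtain a b where ab: "ends e = {a,b}" "a \<noteq> b" using assms by (meson card_2_iff)
  define Y where "Y = (if v \<in> X then X - {v} else insert v X)"
  have cardc: "card ({a,b} \<inter> Z) = (if a \<in> Z then 1 else 0) + (if b \<in> Z then 1 else 0)" for Z
    using ab(2) by (cases "a \<in> Z"; cases "b \<in> Z") (auto simp: Int_insert_left)
  have aY: "a \<in> Y \<longleftrightarrow> (if a = v then a \<notin> X else a \<in> X)" for a using Y_def by auto
  show ?thesis unfolding Y_def[symmetric] ab(1) cardc using ab(2) aY[of a] aY[of b]
    by (cases "a = v"; cases "b = v"; cases "a \<in> X"; cases "b \<in> X") auto
qed

lemma sum_degree: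
  assumes "finite B" "finite S"
  shows "(\<Sum>v\<in>S. degree B ends v) = (\<Sum>e\<in>B. card (ends e \<inter> S))"
proof -
  have "(\<Sum>v\<in>S. degree B ends v) = (\<Sum>v\<in>S. \<Sum>e\<in>B. if v \<in> ends e then 1 else 0)"
  proof (rule sum.cong[OF refl])
    fix v
    have "degree B ends v = (\<Sum>e\<in>{e\<in>B. v \<in> ends e}. 1)" unfolding degree_def by simp
    also have "\<dots> = (\<Sum>e\<in>B. if v \<in> ends e then 1 else 0)"
      by (rule sum.inter_filter[OF assms(1)])
    finally show "degree B ends v = (\<Sum>e\<in>B. if v \<in> ends e then 1 else 0)" .
  qed
  also have "\<dots> = (\<Sum>e\<in>B. \<Sum>v\<in>S. if v \<in> ends e then 1 else 0)" by (rule sum.swap)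
  also have "\<dots> = (\<Sum>e\<in>B. card (ends e \<inter> S))"
  proof (rule sum.cong[OF refl])
    fix e
    have "(\<Sum>v\<in>S. if v \<in> ends e then 1 else (0::nat)) = (\<Sum>v\<in>{v\<in>S. v \<in> ends e}. 1)"
      by (rule sum.inter_filter[OF assms(2), symmetric])
    also have "\<dots> = card (ends e \<inter> S)"
    proof -
      have "{v\<in>S. v \<in> ends e} = ends e \<inter> S" by blast
      thus ?thesis by simp
    qed
    finally show "(\<Sum>v\<in>S. if v \<in> ends e then 1 else 0) = card (ends e \<inter> S)" .
  qed
  finally show ?thesis .
qed

lemma degree_mono:
  assumes "F \<subseteq> B" "finite B"
  shows "degree F ends v \<le> degree B ends v"
  unfolding degree_def by (rule card_mono) (use assms in auto)

lemma degree_split: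
  assumes "F \<subseteq> B" "finite B"
  shows "degree B ends v = degree F ends v + degree (B - F) ends v"
proof -
  have "{e\<in>B. v \<in> ends e} = {e\<in>F. v \<in> ends e} \<union> {e\<in>B - F. v \<in> ends e}" using assms by auto
  moreover have "finite {e\<in>F. v \<in> ends e}" "finite {e\<in>B - F. v \<in> ends e}"
    using assms by (auto intro: finite_subset[where B=B])
  ultimately show ?thesis unfolding degree_def
    by (simp add: card_Un_disjoint disjoint_iff)
qed

lemma nu_ge:
  assumes "finite E" "F \<subseteq> E" "k_edge_colorable k F ends"
  shows "card F \<le> nu k E ends"
proof -
  have fin: "finite {card F | F. F \<subseteq> E \<and> k_edge_colorable k F ends}"
  proof -
    have "{card F | F. F \<subseteq> E \<and> k_edge_colorable k F ends} \<subseteq> card ` Pow E" by auto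
    thus ?thesis using assms(1) finite_subset by blast
  qed
  show ?thesis unfolding nu_def by (rule Max_ge[OF fin]) (use assms in blast)
qed


lemma maxcut:
  assumes "cubic V E ends"
  obtains X where "X \<subseteq> V" "\<forall>v\<in>V. 2 \<le> degree {e\<in>E. card (ends e \<inter> X) = 1} ends v"
proof -
  have finV: "finite V" and finE: "finite E"
    and c2: "\<And>e. e \<in> E \<Longrightarrow> card (ends e) = 2" and d3: "\<And>v. v \<in> V \<Longrightarrow> degree E ends v = 3"
    using assms unfolding cubic_def multigraph_def by auto
  define cr where "cr X = {e\<in>E. card (ends e \<inter> X) = 1}" for X
  define m where "m = Max ((\<lambda>Y. card (cr Y)) ` Pow V)"
  have finPV: "finite ((\<lambda>Y. card (cr Y)) ` Pow V)" using finV by simp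
  have "m \<in> (\<lambda>Y. card (cr Y)) ` Pow V" unfolding m_def by (rule Max_in[OF finPV]) auto
  then obtain X where X: "X \<subseteq> V" "card (cr X) = m" by auto
  have Xmax: "card (cr Y) \<le> card (cr X)" if "Y \<subseteq> V" for Y
    using Max_ge[OF finPV] that X(2) unfolding m_def by auto
  have crdeg: "degree (cr X) ends v \<ge> 2" if vV: "v \<in> V" for v
  proof (rule ccontr)
    assume "\<not> 2 \<le> degree (cr X) ends v"
    hence dle: "degree (cr X) ends v \<le> 1" by simp
    define Y where "Y = (if v \<in> X then X - {v} else insert v X)"
    have YV: "Y \<subseteq> V" using X(1) vV Y_def by auto
    define Ev where "Ev = {e\<in>E. v \<in> ends e}"
    have flip: "e \<in> cr Y \<longleftrightarrow> (if v \<in> ends e then e \<notin> cr X else e \<in> cr X)" if eE: "e \<in> E" for e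
      using flip_cut[where ends=ends and e=e and v=v and X=X, OF c2[OF eE]] eE unfolding cr_def Y_def by auto
    have crY: "cr Y = (cr X - Ev) \<union> (Ev - cr X)"
    proof (rule set_eqI)
      fix e
      show "e \<in> cr Y \<longleftrightarrow> e \<in> (cr X - Ev) \<union> (Ev - cr X)"
      proof (cases "e \<in> E")
        case True thus ?thesis using flip[OF True] unfolding Ev_def by auto
      next
        case False thus ?thesis unfolding Ev_def cr_def by auto
      qed
    qed
    have finEv: "finite Ev" using finE Ev_def by simp
    have fincr: "finite (cr X)" using finE cr_def by simp
    have cEv: "card Ev = 3" using d3[OF vV] unfolding degree_def Ev_def by simp
    have dX: "card (cr X \<inter> Ev) = degree (cr X) ends v"
      unfolding degree_def Ev_def cr_def by (rule arg_cong[where f=card]) auto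
    have "card (cr Y) = card (cr X - Ev) + card (Ev - cr X)"
      unfolding crY by (rule card_Un_disjoint) (use finEv fincr in auto)
    moreover have "card (cr X) = card (cr X - Ev) + card (cr X \<inter> Ev)"
      using card_Int_Diff[OF fincr, of Ev] by linarith
    moreover have "card Ev = card (Ev - cr X) + card (cr X \<inter> Ev)"
      using card_Int_Diff[OF finEv, of "cr X"] by (simp add: Int_commute)
    ultimately have "card (cr Y) > card (cr X)" using dle dX cEv by linarith
    thus False using Xmax[OF YV] by linarith
  qed
  show ?thesis using that X(1) crdeg unfolding cr_def by blast
qed

theorem theorem2:
  fixes V :: "'v set" and E :: "'e set" and ends :: "'e \<Rightarrow> 'v set"
  assumes "cubic V E ends"
  shows "real (nu 2 E ends) \<ge> 4 / 5 * real (card V)"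
proof -
  have finV: "finite V" and finE: "finite E" and endsV: "\<And>e. e \<in> E \<Longrightarrow> ends e \<subseteq> V"
    and c2: "\<And>e. e \<in> E \<Longrightarrow> card (ends e) = 2" and d3: "\<And>v. v \<in> V \<Longrightarrow> degree E ends v = 3"
    using assms unfolding cubic_def multigraph_def by auto
  have finends: "\<And>e. e \<in> E \<Longrightarrow> finite (ends e)" using finV endsV finite_subset by blast
  obtain X where X: "X \<subseteq> V" "\<forall>v\<in>V. 2 \<le> degree {e\<in>E. card (ends e \<inter> X) = 1} ends v"
    using maxcut[OF assms] by blast
  define C where "C = {e\<in>E. card (ends e \<inter> X) = 1}"
  have CE: "C \<subseteq> E" using C_def by auto
  have finC: "finite C" using finE CE finite_subset by blast
  define good where "good B \<longleftrightarrow> B \<subseteq> C \<and> (\<forall>v\<in>V. 2 \<le> degree B ends v)" for B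
  define mB where "mB = Min (card ` {B. good B})"
  have finG: "finite (card ` {B. good B})"
  proof -
    have "{B. good B} \<subseteq> Pow C" using good_def by auto
    thus ?thesis using finC finite_subset by (metis finite_Pow_iff finite_imageI)
  qed
  have "good C" using X(2) good_def C_def by auto
  hence "mB \<in> card ` {B. good B}" unfolding mB_def by (intro Min_in[OF finG]) auto
  then obtain B where gB: "good B" "card B = mB" by auto
  have Bmin: "card B \<le> card B'" if "good B'" for B'
    using Min_le[OF finG] that gB(2) unfolding mB_def by auto
  have BC: "B \<subseteq> C" and Bdeg: "\<And>v. v \<in> V \<Longrightarrow> 2 \<le> degree B ends v" using gB(1) good_def by auto
  have BE: "B \<subseteq> E" using BC CE by auto
  have finB: "finite B" using finC BC finite_subset by blast
  have Bdeg3: "degree B ends v \<le> 3" if "v \<in> V" for v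
    using degree_mono[OF BE finE, of ends v] d3[OF that] by simp
  define T where "T = {v\<in>V. 3 \<le> degree B ends v}"
  have finT: "finite T" using finV T_def by simp
  have TV: "T \<subseteq> V" using T_def by auto
  have noTT: "card (ends e \<inter> T) \<le> 1" if eB: "e \<in> B" for e
  proof (rule ccontr)
    assume "\<not> card (ends e \<inter> T) \<le> 1"
    hence "card (ends e \<inter> T) \<ge> 2" by simp
    moreover have "card (ends e \<inter> T) \<le> card (ends e)"
      using finends[of e] eB BE by (intro card_mono) auto
    ultimately have "ends e \<inter> T = ends e" using c2[of e] finends[of e] eB BE
      by (metis Int_lower1 card_subset_eq le_antisym subsetD)
    hence eT: "ends e \<subseteq> T" by blast
    have "good (B - {e})"
      unfolding good_def
    proof (intro conjI ballI)
      show "B - {e} \<subseteq> C" using BC by auto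
      fix v assume vV: "v \<in> V"
      show "2 \<le> degree (B - {e}) ends v"
      proof (cases "v \<in> ends e")
        case True
        have "{f\<in>B - {e}. v \<in> ends f} = {f\<in>B. v \<in> ends f} - {e}" by auto
        hence "degree (B - {e}) ends v = degree B ends v - 1"
          unfolding degree_def using True eB finB by simp
        moreover have "v \<in> T" using True eT by blast
        ultimately show ?thesis using T_def by auto
      next
        case False
        have "{f\<in>B - {e}. v \<in> ends f} = {f\<in>B. v \<in> ends f}" using False by auto
        thus ?thesis using Bdeg[OF vV] unfolding degree_def by simp
      qed
    qed
    moreover have "card (B - {e}) < card B" using finB eB by (rule card_Diff1_less)
    ultimately show False using Bmin by fastforce
  qed
  have sumB: "(\<Sum>v\<in>V. degree B ends v) = 2 * card B"
  proof -
    have "(\<Sum>v\<in>V. degree B ends v) = (\<Sum>e\<in>B. card (ends e \<inter> V))" by (rule sum_degree[OF finB finV])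
    also have "\<dots> = (\<Sum>e\<in>B. 2)"
    proof (rule sum.cong[OF refl])
      fix e assume "e \<in> B"
      hence "ends e \<inter> V = ends e" "card (ends e) = 2" using endsV c2 BE by auto
      thus "card (ends e \<inter> V) = 2" by simp
    qed
    finally show ?thesis by simp
  qed
  have sumB2: "(\<Sum>v\<in>V. degree B ends v) = 2 * card V + card T"
  proof -
    have "(\<Sum>v\<in>V. degree B ends v) = (\<Sum>v\<in>V. 2 + (if v \<in> T then 1 else 0))"
    proof (rule sum.cong[OF refl])
      fix v assume vV: "v \<in> V"
      show "degree B ends v = 2 + (if v \<in> T then 1 else 0)"
        using Bdeg[OF vV] Bdeg3[OF vV] vV T_def by auto
    qed
    also have "\<dots> = 2 * card V + (\<Sum>v\<in>V. if v \<in> T then 1 else 0)" by (subst sum.distrib) simp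
    also have "(\<Sum>v\<in>V. if v \<in> T then 1 else (0::nat)) = card T"
      using finV TV by (simp add: sum.If_cases Int_absorb1)
    finally show ?thesis .
  qed
  have sumT: "3 * card T \<le> card B"
  proof -
    have "(\<Sum>v\<in>T. degree B ends v) = (\<Sum>e\<in>B. card (ends e \<inter> T))" by (rule sum_degree[OF finB finT])
    also have "\<dots> \<le> (\<Sum>e\<in>B. 1)" by (rule sum_mono) (rule noTT)
    finally have "(\<Sum>v\<in>T. degree B ends v) \<le> card B" by simp
    moreover have "(\<Sum>v\<in>T. degree B ends v) = (\<Sum>v\<in>T. 3)"
      by (rule sum.cong[OF refl]) (use Bdeg3 T_def in force)
    ultimately show ?thesis by simp
  qed
  have T5: "5 * card T \<le> 2 * card V" using sumT sumB sumB2 by linarith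
  define ok where "ok F \<longleftrightarrow> F \<subseteq> B \<and> (\<forall>v. degree F ends v \<le> 2)" for F
  define mF where "mF = Max (card ` {F. ok F})"
  have finO: "finite (card ` {F. ok F})"
  proof -
    have "{F. ok F} \<subseteq> Pow B" using ok_def by auto
    thus ?thesis using finB finite_subset by (metis finite_Pow_iff finite_imageI)
  qed
  have "ok {}" unfolding ok_def degree_def by simp
  hence "mF \<in> card ` {F. ok F}" unfolding mF_def by (intro Max_in[OF finO]) auto
  then obtain F where oF: "ok F" "card F = mF" by auto
  have Fmax: "card F' \<le> card F" if "ok F'" for F'
    using Max_ge[OF finO] that oF(2) unfolding mF_def by auto
  have FB: "F \<subseteq> B" and Fdeg: "\<And>v. degree F ends v \<le> 2" using oF(1) ok_def by auto
  have finF: "finite F" using finB FB finite_subset by blast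
  have sat: "\<exists>x\<in>ends e. degree F ends x = 2" if eN: "e \<in> B - F" for e
  proof (rule ccontr)
    assume "\<not> (\<exists>x\<in>ends e. degree F ends x = 2)"
    hence lt2: "\<And>x. x \<in> ends e \<Longrightarrow> degree F ends x \<le> 1" using Fdeg by (metis le_antisym not_less_eq_eq numeral_2_eq_2 One_nat_def)
    have "ok (insert e F)" unfolding ok_def
    proof (intro conjI allI)
      show "insert e F \<subseteq> B" using FB eN by auto
      fix v
      show "degree (insert e F) ends v \<le> 2"
      proof (cases "v \<in> ends e")
        case True
        have "{f\<in>insert e F. v \<in> ends f} = insert e {f\<in>F. v \<in> ends f}" using True by auto
        hence "degree (insert e F) ends v \<le> Suc (degree F ends v)"
          unfolding degree_def using finF by (simp add: card_insert_if)
        thus ?thesis using lt2[OF True] by linarith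
      next
        case False
        have "{f\<in>insert e F. v \<in> ends f} = {f\<in>F. v \<in> ends f}" using False by auto
        thus ?thesis using Fdeg[of v] unfolding degree_def by simp
      qed
    qed
    moreover have "card (insert e F) > card F" using eN finF by simp
    ultimately show False using Fmax by fastforce
  qed
  have bipF: "\<forall>e\<in>F. \<exists>x y. ends e = {x,y} \<and> x \<in> X \<and> y \<notin> X"
  proof
    fix e assume eF: "e \<in> F"
    hence eC: "e \<in> C" using FB BC by auto
    hence c1: "card (ends e \<inter> X) = 1" and eE: "e \<in> E" using C_def by auto
    obtain a b where ab: "ends e = {a,b}" "a \<noteq> b" using c2[OF eE] by (meson card_2_iff)
    show "\<exists>x y. ends e = {x,y} \<and> x \<in> X \<and> y \<notin> X"
    proof (cases "a \<in> X")
      case True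
      hence "b \<notin> X" using c1 ab by (cases "b \<in> X") (auto simp: Int_insert_left)
      thus ?thesis using ab True by blast
    next
      case False
      hence "b \<in> X" using c1 ab by (cases "b \<in> X") (auto simp: Int_insert_left)
      thus ?thesis using ab False by (metis insert_commute)
    qed
  qed
  have colF: "k_edge_colorable 2 F ends" by (rule bip_color[OF finF bipF]) (use Fdeg in blast)
  define N where "N = B - F"
  define D2 where "D2 = {v\<in>V. degree F ends v = 2}"
  have finN: "finite N" using finB N_def by simp
  have finD2: "finite D2" using finV D2_def by simp
  have D2V: "D2 \<subseteq> V" using D2_def by auto
  have cardB: "card B = card F + card N" unfolding N_def using finB FB
    by (metis card_Diff_subset card_mono le_add_diff_inverse finite_subset)
  have "card N \<le> (\<Sum>e\<in>N. card (ends e \<inter> D2))"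
  proof -
    have "(\<Sum>e\<in>N. 1) \<le> (\<Sum>e\<in>N. card (ends e \<inter> D2))"
    proof (rule sum_mono)
      fix e assume eN: "e \<in> N"
      then obtain x where x: "x \<in> ends e" "degree F ends x = 2" using sat N_def by blast
      have "x \<in> V" using x(1) endsV eN N_def BE by blast
      hence "x \<in> ends e \<inter> D2" using x D2_def by auto
      moreover have "finite (ends e)" using finends[of e] eN N_def BE by blast
      ultimately show "1 \<le> card (ends e \<inter> D2)"
        by (metis One_nat_def Suc_leI card_gt_0_iff empty_iff finite_Int)
    qed
    thus ?thesis by simp
  qed
  also have "\<dots> = (\<Sum>v\<in>D2. degree N ends v)" by (rule sum_degree[OF finN finD2, symmetric])
  also have "\<dots> = (\<Sum>v\<in>D2. degree B ends v - 2)"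
  proof (rule sum.cong[OF refl])
    fix v assume "v \<in> D2"
    hence "degree F ends v = 2" using D2_def by auto
    thus "degree N ends v = degree B ends v - 2" using degree_split[OF FB finB, of ends v] N_def by simp
  qed
  also have "\<dots> \<le> (\<Sum>v\<in>V. degree B ends v - 2)" by (rule sum_mono2[OF finV D2V]) simp
  also have "\<dots> = card T"
  proof -
    have "(\<Sum>v\<in>V. degree B ends v - 2) = (\<Sum>v\<in>V. if v \<in> T then 1 else 0)"
    proof (rule sum.cong[OF refl])
      fix v assume vV: "v \<in> V"
      show "degree B ends v - 2 = (if v \<in> T then 1 else 0)"
        using Bdeg[OF vV] Bdeg3[OF vV] vV T_def by auto
    qed
    also have "\<dots> = card T" using finV TV by (simp add: sum.If_cases Int_absorb1)
    finally show ?thesis .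
  qed
  finally have NT: "card N \<le> card T" .
  have "5 * card F \<ge> 4 * card V" using NT cardB sumB sumB2 T5 by linarith
  moreover have "card F \<le> nu 2 E ends" using nu_ge[OF finE _ colF] FB BE by blast
  ultimately have "5 * nu 2 E ends \<ge> 4 * card V" by linarith
  hence "real (5 * nu 2 E ends) \<ge> real (4 * card V)" by (simp only: of_nat_le_iff)
  thus ?thesis by simp
qed


end
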